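(* Let $\gamma\in(0,1)$ and $c\ge0$. Define the deterministic sequence $\bar v^0=0$ and, for $n\ge1$, $\bar v^n=(1-\tfrac1n)\bar v^{n-1}+\tfrac1n(c+\gamma\bar v^{n-1})$. Extend it to real arguments $x\ge0$ by linear interpolation: $\bar v(x)=\bar v^{\lfloor x\rfloor}+(x-\lfloor x\rfloor)(\bar v^{\lceil x\rceil}-\bar v^{\lfloor x\rfloor})$. Fix any real $n_0>0$ and let $$b=n_0^{1-\gamma}\Big[1-\frac{1-\gamma}{n_0\gamma}-\frac{1-\gamma}{c}\,\bar v(n_0)\Big].$$ Then for all real $n\ge n_0$, $$\bar v(n)\ \le\ \frac{c}{1-\gamma}\Big[1-b\,n^{-(1-\gamma)}-\frac{1-\gamma}{\gamma}\cdot\frac1n\Big].$$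
   Context: This concerns approximate value iteration with stepsize $1/n$ for a single-state, single-action problem with deterministic reward $c$ and discount factor $\gamma$. *)

theory Defs
  imports Complex_Main
begin

text \<open>Approximate value iteration with stepsize 1/n, single state and action,
  reward c, discount gamma: vbar^0 = 0, vbar^n = (1-1/n) vbar^(n-1) + 1/n (c + gamma vbar^(n-1)).\<close>
primrec avi_seq :: "real \<Rightarrow> real \<Rightarrow> nat \<Rightarrow> real" where
  "avi_seq c \<gamma> 0 = 0"
| "avi_seq c \<gamma> (Suc n) =
     (1 - 1 / real (Suc n)) * avi_seq c \<gamma> n + (1 / real (Suc n)) * (c + \<gamma> * avi_seq c \<gamma> n)"

definition avi_interp :: "real \<Rightarrow> real \<Rightarrow> real \<Rightarrow> real" where
  "avi_interp c \<gamma> x =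
     avi_seq c \<gamma> (nat \<lfloor>x\<rfloor>)
     + (x - of_int \<lfloor>x\<rfloor>) * (avi_seq c \<gamma> (nat \<lceil>x\<rceil>) - avi_seq c \<gamma> (nat \<lfloor>x\<rfloor>))"

end

theory Submission
  imports Defs
begin

lemma seq_step:
  "avi_seq c g (Suc k) = avi_seq c g k + (c - (1 - g) * avi_seq c g k) / (real k + 1)"
proof -
  have gen: "\<And>m v. m > 0 \<Longrightarrow> (1 - 1/m) * v + 1/m * (c + g * v) = v + (c - (1-g)*v)/m"
    by (simp add: field_simps)
  have "real k + 1 > 0" by simp
  from gen[OF this, of "avi_seq c g k"] show ?thesis by (simp only: avi_seq.simps of_nat_Suc add.commute)
qed

lemma seq_bounds:
  assumes "0 < g" "g < 1" "0 \<le> c"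
  shows "0 \<le> avi_seq c g k \<and> avi_seq c g k \<le> c / (1 - g)"
proof (induction k)
  case 0 then show ?case using assms by simp
next
  case (Suc k)
  let ?v = "avi_seq c g k"
  have k1: "real k + 1 \<noteq> 0" by (simp add: add_nonneg_eq_0_iff)
  have e1: "avi_seq c g (Suc k) = (1 - (1 - g)/(real k + 1)) * ?v + c / (real k + 1)"
  proof -
    have gen: "\<And>m v. m > 0 \<Longrightarrow> v + (c - (1-g)*v)/m = (1 - (1 - g)/m) * v + c / m"
      by (simp add: field_simps)
    show ?thesis unfolding seq_step by (rule gen) simp
  qed
  have e2: "c/(1-g) - avi_seq c g (Suc k) = (1 - (1 - g)/(real k + 1)) * (c/(1-g) - ?v)"
  proof -
    have gen: "\<And>m v. m > 0 \<Longrightarrow> c/(1-g) - (v + (c - (1-g)*v)/m) = (1 - (1 - g)/m) * (c/(1-g) - v)"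
      using assms by (simp add: field_simps)
    show ?thesis unfolding seq_step by (rule gen) simp
  qed
  have p: "0 \<le> 1 - (1 - g)/(real k + 1)" using assms by (simp add: field_simps)
  have "0 \<le> avi_seq c g (Suc k)" unfolding e1 using Suc p assms by simp
  moreover have "0 \<le> c/(1-g) - avi_seq c g (Suc k)" unfolding e2 using Suc p by simp
  ultimately show ?case by simp
qed

lemma interp_eq:
  assumes "real k \<le> x" "x \<le> real k + 1"
  shows "avi_interp c g x = avi_seq c g k + (x - real k) * (avi_seq c g (Suc k) - avi_seq c g k)"
proof (cases "x = real k + 1")
  case True
  then have "x = real (Suc k)" by simp
  then show ?thesis unfolding avi_interp_def
    by (simp only: floor_of_nat ceiling_of_nat nat_int) (simp del: avi_seq.simps)
next
  case False
  with assms have lt: "x < real k + 1" by simp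
  show ?thesis
  proof (cases "x = real k")
    case True then show ?thesis unfolding avi_interp_def by simp
  next
    case False
    with assms lt have "floor x = int k" "ceiling x = int k + 1"
      by (auto intro!: floor_unique ceiling_unique)
    then show ?thesis unfolding avi_interp_def by (simp add: nat_add_distrib)
  qed
qed

definition HH :: "real \<Rightarrow> real \<Rightarrow> real \<Rightarrow> real" where
  "HH c g x = x powr (1-g) * (c/(1-g) - avi_interp c g x) - c/g * x powr (-g)"

lemma HH_mono_int:
  assumes g: "0 < g" "g < 1" and c: "0 \<le> c"
    and ab: "0 < a" "a \<le> b" "real k \<le> a" "b \<le> real k + 1"
  shows "HH c g a \<le> HH c g b"
proof -
  define vk where "vk = avi_seq c g k"
  define d where "d = avi_seq c g (Suc k) - vk"
  define V where "V = c / (1 - g)"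
  define h where "h = (\<lambda>x. x powr (1-g) * (V - (vk + (x - real k) * d)) - c/g * x powr (-g))"
  have hb: "0 \<le> vk" "vk \<le> V" using seq_bounds[OF g c, of k] by (auto simp: vk_def V_def)
  have dd: "d = (1 - g) * (V - vk) / (real k + 1)"
  proof -
    have "d = (c - (1-g) * vk) / (real k + 1)" unfolding d_def vk_def by (simp only: seq_step)
    moreover have "(1-g) * (V - vk) = c - (1-g) * vk"
    proof -
      have "(1-g) * V = c" unfolding V_def using g by simp
      then show ?thesis by (simp only: right_diff_distrib)
    qed
    ultimately show ?thesis by simp
  qed
  have d0: "0 \<le> d" unfolding dd using hb g by simp
  have cV: "c = (1 - g) * V" unfolding V_def using g by simp
  have "h a \<le> h b"
  proof (rule DERIV_nonneg_imp_nondecreasing[OF ab(2)])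
    fix x assume x: "a \<le> x" "x \<le> b"
    have xp: "0 < x" using x ab by simp
    define L where "L = vk + (x - real k) * d"
    define D where "D = (1-g) * x powr (1-g-1) * (V - L) + (-d) * x powr (1-g)
        - c/g * ((-g) * x powr (-g-1))"
    have der: "DERIV h x :> D"
    proof -
      have d1: "((\<lambda>x. x powr (1-g)) has_real_derivative (1-g) * x powr (1-g-1)) (at x)"
        by (rule has_real_derivative_powr[OF xp])
      have d3: "((\<lambda>x. x powr (-g)) has_real_derivative (-g) * x powr (-g-1)) (at x)"
        by (rule has_real_derivative_powr[OF xp])
      have d2: "((\<lambda>x. V - (vk + (x - real k) * d)) has_real_derivative -d) (at x)"
        by (auto intro!: derivative_eq_intros)
      show ?thesis unfolding h_def D_def L_def
        using DERIV_diff[OF DERIV_mult[OF d1 d2] DERIV_cmult[OF d3, of "c/g"]] by simp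
    qed
    have eq1: "x powr (1-g) = x * x powr (-g)"
    proof -
      have "x powr (1-g) = x powr (1 + -g)" by simp
      also have "\<dots> = x powr 1 * x powr (-g)" by (rule powr_add)
      finally show ?thesis using xp by simp
    qed
    have eq2: "x powr (-g-1) = x powr (-g) / x"
    proof -
      have "x powr (-g-1) = x powr (-g) / x powr 1" by (rule powr_diff)
      then show ?thesis using xp by simp
    qed
    have eq3: "1 - g - 1 = -g" by simp
    define E where "E = (1-g) * (V - L) - x * d + c / x"
    have DE: "D = x powr (-g) * E"
      unfolding D_def E_def eq3 eq1 eq2 using g xp by (simp add: field_simps)
    have xk: "x - real k \<le> 1" "0 \<le> x - real k" "x \<le> real k + 1" using x ab by auto
    have "(1-g) * (x - real k) * d \<le> (1-g) * d" using xk d0 g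
    proof -
      have "(x - real k) * d \<le> d" using xk d0 by (intro mult_left_le_one_le) auto
      then have "(1-g) * ((x - real k) * d) \<le> (1-g) * d" using g by (intro mult_left_mono) auto
      then show ?thesis by (simp add: mult.assoc)
    qed
    moreover have "x * d \<le> (real k + 1) * d" using xk d0 by (simp add: mult_right_mono)
    moreover have "(real k + 1) * d = (1-g) * (V - vk)" unfolding dd by simp
    moreover have "(1-g) * d \<le> c / x"
    proof -
      have "(1-g) * d \<le> (1-g) * V / (real k + 1)"
      proof -
        have a0: "(1-g)*(V-vk) \<le> V - vk" using g hb by (intro mult_left_le_one_le) auto
        have a1: "(1-g)*((1-g)*(V-vk)) \<le> (1-g)*V" using a0 hb g by (intro mult_left_mono) auto
        have "(1-g) * d = (1-g)*((1-g)*(V-vk)) / (real k + 1)" unfolding dd by simp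
        also have "\<dots> \<le> (1-g)*V / (real k + 1)" using a1 by (intro divide_right_mono) auto
        finally show ?thesis .
      qed
      also have "\<dots> = c / (real k + 1)" using cV by simp
      also have "\<dots> \<le> c / x" using xp xk c by (simp add: frac_le)
      finally show ?thesis .
    qed
    ultimately have "0 \<le> E" unfolding E_def L_def by (simp add: algebra_simps)
    then have "0 \<le> D" unfolding DE using xp by simp
    with der show "\<exists>y. DERIV h x :> y \<and> 0 \<le> y" by blast
  qed
  moreover have "h a = HH c g a" "h b = HH c g b"
    unfolding h_def HH_def V_def vk_def d_def
    using interp_eq[of k a c g] interp_eq[of k b c g] ab by auto
  ultimately show ?thesis by simp
qed

lemma HH_mono:
  assumes g: "0 < g" "g < 1" and c: "0 \<le> c"
  shows "\<forall>x y. 0 < x \<longrightarrow> x \<le> y \<longrightarrow> y \<le> real m \<longrightarrow> HH c g x \<le> HH c g y"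
proof (induction m)
  case 0 then show ?case by auto
next
  case (Suc m)
  show ?case
  proof (intro allI impI)
    fix x y assume xy: "0 < x" "x \<le> y" "y \<le> real (Suc m)"
    show "HH c g x \<le> HH c g y"
    proof (cases "y \<le> real m")
      case True then show ?thesis using Suc xy by blast
    next
      case ny: False
      show ?thesis
      proof (cases "real m \<le> x")
        case True then show ?thesis using HH_mono_int[OF g c, of x y m] xy by simp
      next
        case False
        then have "HH c g x \<le> HH c g (real m)" using Suc xy by auto
        also have "\<dots> \<le> HH c g y" using HH_mono_int[OF g c, of "real m" y m] xy ny False by simp
        finally show ?thesis .
      qed
    qed
  qed
qed

lemma seq_zero: "avi_seq 0 g k = 0"
  by (induction k) auto

theorem theorem6:
  fixes \<gamma> c n\<^sub>0 n b :: real
  assumes "0 < \<gamma>" and "\<gamma> < 1" and "0 \<le> c"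
    and "0 < n\<^sub>0"
    and "b = n\<^sub>0 powr (1 - \<gamma>) *
           (1 - (1 - \<gamma>) / (n\<^sub>0 * \<gamma>) - (1 - \<gamma>) / c * avi_interp c \<gamma> n\<^sub>0)"
    and "n\<^sub>0 \<le> n"
  shows "avi_interp c \<gamma> n \<le>
           c / (1 - \<gamma>) * (1 - b * n powr (- (1 - \<gamma>)) - (1 - \<gamma>) / \<gamma> * (1 / n))"
proof (cases "c = 0")
  case True
  then show ?thesis by (simp add: avi_interp_def seq_zero)
next
  case False
  then have cp: "0 < c" using assms by simp
  have np: "0 < n" using assms by simp
  define V where "V = c / (1 - \<gamma>)"
  have Vb: "V * b = HH c \<gamma> n\<^sub>0"
  proof -
    have "n\<^sub>0 powr (1-\<gamma>) = n\<^sub>0 * n\<^sub>0 powr (-\<gamma>)" using assms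
      by (metis add.commute diff_conv_add_uminus powr_add powr_one less_imp_le)
    then show ?thesis unfolding HH_def V_def assms(5) using assms cp
      by (simp add: field_simps)
  qed
  have mono: "HH c \<gamma> n\<^sub>0 \<le> HH c \<gamma> n"
    using HH_mono[OF assms(1,2,3), of "nat \<lceil>n\<rceil>"] assms by (meson real_nat_ceiling_ge)
  have p1: "n powr (1-\<gamma>) = n * n powr (-\<gamma>)" using np
    by (metis add.commute diff_conv_add_uminus powr_add powr_one less_imp_le)
  have p2: "n powr (-(1-\<gamma>)) = 1 / n powr (1-\<gamma>)" by (rule powr_minus_divide)
  have pp: "0 < n powr (-\<gamma>)" using np by simp
  have "V * b * n powr (-(1-\<gamma>)) \<le> HH c \<gamma> n * n powr (-(1-\<gamma>))"
    using Vb mono np by (simp add: mult_right_mono)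
  also have "HH c \<gamma> n * n powr (-(1-\<gamma>)) = V - avi_interp c \<gamma> n - c / (\<gamma> * n)"
    unfolding HH_def p2 p1 V_def using np pp assms by (simp add: field_simps)
  finally have "V * b * n powr (-(1-\<gamma>)) \<le> V - avi_interp c \<gamma> n - c / (\<gamma> * n)" .
  moreover have "c / (1 - \<gamma>) * (1 - b * n powr (- (1 - \<gamma>)) - (1 - \<gamma>) / \<gamma> * (1 / n))
     = V - V * b * n powr (-(1-\<gamma>)) - c / (\<gamma> * n)"
  proof -
    have g1: "1 - \<gamma> \<noteq> 0" using assms by simp
    have "c/(1-\<gamma>) * ((1-\<gamma>)/\<gamma>*(1/n)) = c/(\<gamma>*n)" using g1 by simp
    moreover have "c / (1 - \<gamma>) * (1 - b * n powr (- (1 - \<gamma>)) - (1 - \<gamma>) / \<gamma> * (1 / n))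
      = c/(1-\<gamma>) - c/(1-\<gamma>) * b * n powr (- (1 - \<gamma>)) - c/(1-\<gamma>) * ((1-\<gamma>)/\<gamma>*(1/n))"
      by (simp only: right_diff_distrib mult_1_right mult.assoc)
    ultimately show ?thesis unfolding V_def by simp
  qed
  ultimately show ?thesis by simp
qed

end
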